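(* Let $G$ be an outside option CDF on $[0,1]$ with mean $\xi\in(0,1)$, full support, and a log-concave density $g$, known to the seller. For $s\in[0,\xi)$ let $a(s)$ solve $\int_{a}^1(v-a)\,dG(v)=s$, let $p_h$ be the unique solution of $p=G(1-p)/g(1-p)$, and let $p^o(s)$ be the optimal price, namely $p^o(s)=1-a(s)$ if $1-a(s)\ge p_hG(1-p_h)$ and $p^o(s)=p_h$ otherwise. Then there exists $\hat s_G\in(0,\xi)$ such that $p^o(s)=p_h$ for every $s<\hat s_G$ and $p^o(s)=1-a(s)$ for every $s\ge\hat s_G$; moreover, at $s=\hat s_G$ the optimal price drops from $p_h$ to $1-a(\hat s_G)$, i.e., $1-a(\hat s_G)<p_h$.
   Context: Setting: a seller with a product of binary match value ($\mathbb P(x=1)=\mu\in(0,1)$) chooses a price $p\in[0,1]$ and a distribution $H$ on $[0,1]$ of the buyer's posterior with mean $\mu$, to maximize revenue $p\int_0^1[1-H(p+\min\{a,v\})]\,dG(v)$ for the known outside option CDF $G$, where $s\in[0,\xi)$ is the buyer's search cost. With full information (which is optimal in this setting), the optimal price is $p^o(s)$ as given in the claim. *)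

theory Defs
  imports "HOL-Analysis.Analysis"
begin

definition opt_price :: "(real \<Rightarrow> real) \<Rightarrow> (real \<Rightarrow> real) \<Rightarrow> real \<Rightarrow> real \<Rightarrow> real" where
  "opt_price G a ph s = (if 1 - a s \<ge> ph * G (1 - ph) then 1 - a s else ph)"

end

theory Submission
  imports Defs
begin

lemma pos_integral:
  fixes f :: "real \<Rightarrow> real"
  assumes xy: "x < y" and fi: "f integrable_on {x..y}" and fp: "\<And>t. t \<in> {x<..<y} \<Longrightarrow> f t > 0"
  shows "integral {x..y} f > 0"
proof -
  let ?S = "{x<..<y}"
  have i: "f integrable_on ?S" using fi integrable_on_open_interval_real by blast
  have eqS: "integral {x..y} f = integral ?S f" by (rule integral_open_interval_real)
  have ge: "integral ?S f \<ge> 0" using i fp by (intro integral_nonneg) (auto intro: less_imp_le)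
  have ai: "set_integrable lebesgue ?S f"
    using nonnegative_absolutely_integrable_1[OF i] fp less_imp_le by blast
  have eq: "integral ?S f = (LINT t:?S|lebesgue. f t)"
    using set_lebesgue_integral_eq_integral(2)[OF ai] by simp
  have "integral ?S f \<noteq> 0"
  proof
    assume z: "integral ?S f = 0"
    have int: "integrable lebesgue (\<lambda>t. indicator ?S t *\<^sub>R f t)"
      using ai unfolding set_integrable_def .
    have "integral\<^sup>L lebesgue (\<lambda>t. indicator ?S t *\<^sub>R f t) = 0"
      using z eq unfolding set_lebesgue_integral_def by simp
    moreover have "AE t in lebesgue. 0 \<le> indicator ?S t *\<^sub>R f t"
      using fp by (auto simp: indicator_def intro: less_imp_le)
    ultimately have "AE t in lebesgue. indicator ?S t *\<^sub>R f t = 0"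
      using integral_nonneg_eq_0_iff_AE[OF int] by simp
    then obtain N where N2: "{t \<in> space lebesgue. \<not> indicator ?S t *\<^sub>R f t = 0} \<subseteq> N"
       and N3: "emeasure lebesgue N = 0" and N4: "N \<in> sets lebesgue"
      by (rule AE_E)
    have N1: "N \<in> null_sets lebesgue" using N3 N4 by (rule null_setsI)
    note N = N1 N2
    have "?S \<subseteq> N"
    proof
      fix t assume t: "t \<in> ?S"
      then have "indicator ?S t *\<^sub>R f t \<noteq> 0" using fp[OF t] by simp
      then have "t \<in> {t \<in> space lebesgue. \<not> indicator ?S t *\<^sub>R f t = 0}" by simp
      then show "t \<in> N" by (rule subsetD[OF N(2)])
    qed
    moreover have "?S \<in> sets lebesgue" by simp
    ultimately have "?S \<in> null_sets lebesgue" using N(1) null_sets_subset by metis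
    then have "negligible ?S" using negligible_iff_null_sets by blast
    moreover have "\<not> negligible ?S" using xy by (intro open_not_negligible) simp_all
    ultimately show False by blast
  qed
  then show ?thesis using ge eqS by simp
qed
theorem corollary1:
  fixes g G a :: "real \<Rightarrow> real" and \<xi> ph :: real
  assumes g_int: "g integrable_on {0..1}"
    and g_total: "integral {0..1} g = 1"
    and g_pos: "\<And>x. x \<in> {0<..<1} \<Longrightarrow> g x > 0"
    and g_logconc: "concave_on {0<..<1} (\<lambda>x. ln (g x))"
    and G_def: "\<And>x. x \<in> {0..1} \<Longrightarrow> G x = integral {0..x} g"
    and xi_def: "\<xi> = integral {0..1} (\<lambda>v. v * g v)"
    and xi_bounds: "0 < \<xi>" "\<xi> < 1"
    and a_sol: "\<And>s. s \<in> {0..<\<xi>} \<Longrightarrow>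
                  a s \<in> {0..1} \<and> integral {a s..1} (\<lambda>v. (v - a s) * g v) = s"
    and ph_sol: "ph \<in> {0<..<1}" "ph = G (1 - ph) / g (1 - ph)"
  shows "\<exists>sh \<in> {0<..<\<xi>}.
           (\<forall>s \<in> {0..<sh}. opt_price G a ph s = ph) \<and>
           (\<forall>s \<in> {sh..<\<xi>}. opt_price G a ph s = 1 - a s) \<and>
           1 - a sh < ph"
proof -
  define h where "h = (\<lambda>t v. (v - t) * g v)"
  define \<phi> where "\<phi> = (\<lambda>t. integral {t..1} (h t))"
  have gnn: "\<And>v. v \<in> {0<..<1} \<Longrightarrow> 0 \<le> g v" using g_pos less_imp_le by blast
  have gio: "g integrable_on {0<..<1}" using g_int integrable_on_open_interval_real by blast
  have gA: "g absolutely_integrable_on {0<..<1}"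
    using nonnegative_absolutely_integrable_1[OF gio] gnn by blast
  have hA: "h t absolutely_integrable_on {0<..<1}" for t
    unfolding h_def
  proof (rule absolutely_integrable_bounded_measurable_product_real[OF _ _ _ gA])
    show "(\<lambda>v. v - t) \<in> borel_measurable (lebesgue_on {0<..<1})"
      by (rule continuous_imp_measurable_on_sets_lebesgue) (auto intro!: continuous_intros)
    show "{0<..<1::real} \<in> sets lebesgue" by simp
    have "(\<lambda>v. v - t) ` {0<..<1} \<subseteq> cball 0 (1 + \<bar>t\<bar>)" by (auto simp: dist_real_def)
    then show "bounded ((\<lambda>v. v - t) ` {0<..<1})" using bounded_cball bounded_subset by blast
  qed
  have hI01: "h t integrable_on {0..1}" for t
    using hA[of t] integrable_on_open_interval_real absolutely_integrable_on_def by blast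
  have hI: "h t integrable_on {u..w}" if "0 \<le> u" "w \<le> 1" for t u w
    by (rule integrable_on_subinterval[OF hI01[of t]]) (use that in auto)
  have gI: "g integrable_on {u..w}" if "0 \<le> u" "w \<le> 1" for u w
    by (rule integrable_on_subinterval[OF g_int]) (use that in auto)
  have strict: "\<phi> w < \<phi> u" if uw: "0 \<le> u" "u < w" "w \<le> 1" for u w
  proof -
    have c1: "integral {u..w} (h u) + integral {w..1} (h u) = integral {u..1} (h u)"
      using Henstock_Kurzweil_Integration.integral_combine[where f="h u" and a=u and c=w and b=1] hI[of u 1 u] uw by auto
    have "integral {w..1} (h u) = integral {w..1} (\<lambda>v. h w v + (w - u) * g v)"
      unfolding h_def by (rule integral_cong) (simp add: algebra_simps)
    also have "\<dots> = integral {w..1} (h w) + (w - u) * integral {w..1} g"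
      using hI[of w 1 w] gI[of w 1] uw by (simp add: integral_add integrable_on_cmult_right)
    finally have c2: "integral {w..1} (h u) = integral {w..1} (h w) + (w - u) * integral {w..1} g" .
    have c3: "integral {u..w} (h u) > 0"
      using uw hI[of u w u] by (intro pos_integral) (auto simp: h_def intro!: g_pos mult_pos_pos)
    have c4: "integral {w..1} g \<ge> 0"
    proof (cases "w < 1")
      case True
      then show ?thesis using gI[of w 1] uw by (intro less_imp_le[OF pos_integral]) (auto intro!: g_pos)
    next
      case False
      then have "w = 1" using uw by simp
      then show ?thesis by simp
    qed
    have "(w - u) * integral {w..1} g \<ge> 0" using c4 uw by simp
    then show ?thesis unfolding \<phi>_def using c1 c2 c3 by linarith
  qed
  have weak: "\<phi> w \<le> \<phi> u" if "0 \<le> u" "u \<le> w" "w \<le> 1" for u w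
    using strict[of u w] that by (cases "u = w") auto
  have phi0: "\<phi> 0 = \<xi>" unfolding \<phi>_def h_def xi_def by simp
  have phi1: "\<phi> 1 = 0" unfolding \<phi>_def by simp
  have php: "0 < ph" "ph < 1" using ph_sol(1) by auto
  have gph: "g (1 - ph) > 0" using php by (intro g_pos) auto
  have Gph_eq: "G (1 - ph) = ph * g (1 - ph)"
    using ph_sol(2) gph by (simp add: field_simps)
  have Gpos: "G (1 - ph) > 0" using Gph_eq php gph by simp
  have "integral {0..1 - ph} g + integral {1 - ph..1} g = integral {0..1} g"
    using Henstock_Kurzweil_Integration.integral_combine[where f=g and a=0 and c="1 - ph" and b=1] g_int php by auto
  moreover have "integral {1 - ph..1} g > 0"
    using gI[of "1 - ph" 1] php by (intro pos_integral) (auto intro!: g_pos)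
  moreover have "G (1 - ph) = integral {0..1 - ph} g" using G_def php by auto
  ultimately have Glt: "G (1 - ph) < 1" using g_total by linarith
  define c where "c = ph * G (1 - ph)"
  have c0: "0 < c" unfolding c_def using Gpos php by simp
  have cph: "c < ph" unfolding c_def using Glt php by (simp add: mult_less_cancel_left1)
  define sh where "sh = \<phi> (1 - c)"
  have sh0: "0 < sh" unfolding sh_def using strict[of "1 - c" 1] c0 cph php phi1 by auto
  have sh1: "sh < \<xi>" unfolding sh_def using strict[of 0 "1 - c"] c0 cph php phi0 by auto
  have aeq: "\<phi> (a s) = s" "0 \<le> a s" "a s \<le> 1" if "s \<in> {0..<\<xi>}" for s
    using a_sol[OF that] unfolding \<phi>_def h_def by auto
  have ash: "a sh = 1 - c"
  proof -
    have s: "sh \<in> {0..<\<xi>}" using sh0 sh1 by auto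
    have "\<not> a sh < 1 - c" using strict[of "a sh" "1 - c"] aeq[OF s] sh_def c0 by auto
    moreover have "\<not> 1 - c < a sh" using strict[of "1 - c" "a sh"] aeq[OF s] sh_def cph php by auto
    ultimately show ?thesis by simp
  qed
  show ?thesis
  proof (intro bexI conjI ballI)
    show "sh \<in> {0<..<\<xi>}" using sh0 sh1 by simp
    show "1 - a sh < ph" using ash cph by simp
  next
    fix s assume s0: "s \<in> {0..<sh}"
    then have s: "s \<in> {0..<\<xi>}" "s < sh" using sh1 by auto
    note A = aeq[OF s(1)]
    have "\<not> a s \<le> 1 - c"
    proof
      assume as: "a s \<le> 1 - c"
      have "\<phi> (1 - c) \<le> \<phi> (a s)" by (rule weak) (use as A(2) c0 in linarith)+
      then show False using A(1) s(2) sh_def by linarith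
    qed
    then have "\<not> (1 - a s \<ge> ph * G (1 - ph))" unfolding c_def[symmetric] by linarith
    then show "opt_price G a ph s = ph" unfolding opt_price_def by (rule if_not_P)
  next
    fix s assume s0: "s \<in> {sh..<\<xi>}"
    then have s: "s \<in> {0..<\<xi>}" "sh \<le> s" using sh0 by auto
    note A = aeq[OF s(1)]
    have "a s \<le> 1 - c"
    proof (rule ccontr)
      assume "\<not> a s \<le> 1 - c"
      then have "\<phi> (a s) < \<phi> (1 - c)" by (intro strict) (use A(3) c0 cph php in linarith)+
      then show False using A(1) s(2) sh_def by linarith
    qed
    then have "1 - a s \<ge> ph * G (1 - ph)" unfolding c_def[symmetric] by linarith
    then show "opt_price G a ph s = 1 - a s" unfolding opt_price_def by (rule if_P)
  qed
qed

end
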